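(* Let $1\le W<d<\infty$ be integers and let $\Phi:\mathbb R^W\to\mathbb R^d$ be a $C^2$ map. Suppose that for some open set $U\subset\mathbb R^d$ the first and second derivatives of $\Phi$ are uniformly bounded on $\Phi^{-1}(U)$, and that the Jacobian $J(\mathbf w)=\frac{\partial\Phi}{\partial\mathbf w}(\mathbf w)$ is uniformly non-degenerate on $\Phi^{-1}(U)$ in the sense that the smallest eigenvalue of $J^*(\mathbf w)J(\mathbf w)$ is bounded below by a positive constant for all $\mathbf w\in\Phi^{-1}(U)$. Then $F_\Phi\cap U\subset\Phi(\mathbb R^W)$.
   Context: For a target $\mathbf f\in\mathbb R^d$, let $L_{\mathbf f}(\mathbf w)=\frac12\|\mathbf f-\Phi(\mathbf w)\|^2$ and let $\mathbf w(t)$, $t\ge0$, be the solution of the gradient flow $\frac{d\mathbf w}{dt}=-\nabla_{\mathbf w}L_{\mathbf f}(\mathbf w(t))$ with $\mathbf w(0)=\mathbf 0$. The set of GF-learnable targets is $F_\Phi=\{\mathbf f\in\mathbb R^d:\inf_{t\ge0}L_{\mathbf f}(\mathbf w(t))=0\}$. *)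

theory Defs
  imports "HOL-Analysis.Analysis"
begin

definition loss :: "('w::real_normed_vector \<Rightarrow> 'd::real_normed_vector) \<Rightarrow> 'd \<Rightarrow> 'w \<Rightarrow> real" where
  "loss \<Phi> f w = (1/2) * (norm (f - \<Phi> w))^2"

definition gradient :: "('a::real_inner \<Rightarrow> real) \<Rightarrow> 'a \<Rightarrow> 'a" where
  "gradient g x = (THE v. (g has_derivative (\<lambda>h. v \<bullet> h)) (at x))"

definition GF_learnable :: "(real^'w \<Rightarrow> real^'d) \<Rightarrow> (real^'d) set" where
  "GF_learnable \<Phi> = {f. \<exists>w :: real \<Rightarrow> real^'w.
      w 0 = 0 \<and>
      (\<forall>t\<ge>0. (w has_vector_derivative (- gradient (loss \<Phi> f) (w t))) (at t within {0..})) \<and>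
      (INF t\<in>{0..}. loss \<Phi> f (w t)) = 0}"

text \<open>All eigenvalues of a square matrix are at least c (for the symmetric matrix J^T J this
  says its smallest eigenvalue is at least c).\<close>
definition eigenvalues_ge :: "real^'n^'n \<Rightarrow> real \<Rightarrow> bool" where
  "eigenvalues_ge A c \<longleftrightarrow> (\<forall>e. (\<exists>v. v \<noteq> 0 \<and> A *v v = e *\<^sub>R v) \<longrightarrow> c \<le> e)"

end

theory Submission
  imports Defs
begin
lemma quad_zero:
  fixes a b :: real
  assumes "\<And>s. 0 \<le> b * s + a * s^2"
  shows "b = 0"
proof (rule ccontr)
  assume nb: "b \<noteq> 0"
  define s where "s = - b / (2 * (\<bar>a\<bar> + 1))"
  have pos: "\<bar>a\<bar> + 1 > 0" by simp
  have "b * s + a * s^2 \<le> b * s + \<bar>a\<bar> * s^2"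
    by (intro add_left_mono mult_right_mono) auto
  also have "\<dots> = b^2 * (\<bar>a\<bar> / (4 * (\<bar>a\<bar>+1)^2) - 1 / (2 * (\<bar>a\<bar>+1)))"
    unfolding s_def using pos by (simp add: field_simps power2_eq_square)
  also have "\<dots> < 0"
  proof -
    have "\<bar>a\<bar> / (4 * (\<bar>a\<bar>+1)^2) < 1 / (2 * (\<bar>a\<bar>+1))"
    proof -
      define p where "p = \<bar>a\<bar> + 1"
      have p0: "p > 0" "\<bar>a\<bar> < p" unfolding p_def by auto
      have "\<bar>a\<bar> * (2 * p) < 1 * (4 * p^2)" using p0 by (simp add: power2_eq_square)
      then have "\<bar>a\<bar> / (4 * p^2) < 1 / (2 * p)" using p0
        by (simp add: frac_less_eq field_simps)
      then show ?thesis unfolding p_def .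
    qed
    moreover have "b^2 > 0" using nb by simp
    ultimately show ?thesis by (simp add: mult_pos_neg)
  qed
  finally show False using assms[of s] by simp
qed

lemma norm_sq_expand:
  fixes x y :: "'a::real_inner"
  shows "(norm (x + s *\<^sub>R y))^2 = (norm x)^2 + 2 * s * (x \<bullet> y) + s^2 * (norm y)^2"
proof -
  have "(norm (x + s *\<^sub>R y))^2 = (x + s *\<^sub>R y) \<bullet> (x + s *\<^sub>R y)" by (rule power2_norm_eq_inner)
  also have "\<dots> = x \<bullet> x + 2 * s * (x \<bullet> y) + s^2 * (y \<bullet> y)"
    by (simp add: inner_add_left inner_add_right inner_commute algebra_simps power2_eq_square)
  finally show ?thesis by (simp add: power2_norm_eq_inner)
qed

lemma rayleigh:
  fixes J :: "real^'w \<Rightarrow> real^'d"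
  assumes lin: "linear J"
    and ev: "eigenvalues_ge (transpose (matrix J) ** matrix J) c"
  shows "c * (norm x)^2 \<le> (norm (J x))^2"
proof -
  define q where "q u = (norm (J u))^2" for u
  have cq: "continuous_on (sphere 0 1) q"
    unfolding q_def by (intro continuous_intros linear_continuous_on lin[unfolded linear_conv_bounded_linear])
  have ne: "sphere (0::real^'w) 1 \<noteq> {}" by simp
  obtain u0 where u0: "u0 \<in> sphere 0 1" and min: "\<And>u. u \<in> sphere 0 1 \<Longrightarrow> q u0 \<le> q u"
    using continuous_attains_inf[OF compact_sphere ne cq] by blast
  define l where "l = q u0"
  have nu0: "norm u0 = 1" using u0 by simp
  have all: "l * (norm x)^2 \<le> q x" for x
  proof (cases "x = 0")
    case True then show ?thesis by (simp add: q_def linear_0[OF lin])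
  next
    case False
    have "(x /\<^sub>R norm x) \<in> sphere 0 1" using False by simp
    hence "l \<le> q (x /\<^sub>R norm x)" using min l_def by blast
    also have "q (x /\<^sub>R norm x) = q x / (norm x)^2"
      unfolding q_def using False by (simp add: linear_cmul[OF lin] power_mult_distrib power_inverse divide_inverse mult.commute)
    finally show ?thesis using False by (simp add: field_simps)
  qed
  have orth: "J u0 \<bullet> J h = l * (u0 \<bullet> h)" for h
  proof -
    have "0 \<le> (2 * (J u0 \<bullet> J h - l * (u0 \<bullet> h))) * s + (q h - l * (norm h)^2) * s^2" for s
    proof -
      have "l * (norm (u0 + s *\<^sub>R h))^2 \<le> q (u0 + s *\<^sub>R h)" by (rule all)
      moreover have "(norm (u0 + s *\<^sub>R h))^2 = 1 + 2 * s * (u0 \<bullet> h) + s^2 * (norm h)^2"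
        using nu0 norm_sq_expand[of u0 s h] by simp
      moreover have "q (u0 + s *\<^sub>R h) = q u0 + 2 * s * (J u0 \<bullet> J h) + s^2 * q h"
        unfolding q_def using norm_sq_expand[of "J u0" s "J h"] by (simp add: linear_add[OF lin] linear_cmul[OF lin])
      ultimately show ?thesis unfolding l_def by (simp add: algebra_simps power2_eq_square)
    qed
    from quad_zero[OF this] show ?thesis by simp
  qed
  define M where "M = matrix J"
  have MJ: "M *v y = J y" for y unfolding M_def using lin by (metis matrix_vector_mul(2))
  define z where "z = (transpose M ** M) *v u0 - l *\<^sub>R u0"
  have "z \<bullet> h = 0" for h
  proof -
    have "((transpose M ** M) *v u0) \<bullet> h = J u0 \<bullet> J h"
      by (simp add: matrix_vector_mul_assoc[symmetric] transpose_matrix_vector dot_lmul_matrix MJ)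
    then show ?thesis unfolding z_def by (simp add: inner_diff_left orth)
  qed
  hence "z = 0" by (metis inner_eq_zero_iff)
  hence "(transpose M ** M) *v u0 = l *\<^sub>R u0" unfolding z_def by simp
  moreover have "u0 \<noteq> 0" using nu0 by auto
  ultimately have "c \<le> l" using ev unfolding eigenvalues_ge_def M_def by blast
  then have "c * (norm x)^2 \<le> l * (norm x)^2" by (simp add: mult_right_mono)
  also have "\<dots> \<le> (norm (J x))^2" using all q_def by simp
  finally show ?thesis .
qed

lemma stay_gen:
  fixes D :: "real \<Rightarrow> real"
  assumes cont: "continuous_on {t0..} D"
    and start: "D t0 \<le> R"
    and loc: "\<And>t. t0 \<le> t \<Longrightarrow> D t \<le> R \<Longrightarrow> \<exists>\<delta>>0. \<forall>s. t \<le> s \<and> s \<le> t + \<delta> \<longrightarrow> D s \<le> D t"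
  shows "\<forall>t\<ge>t0. D t \<le> R"
proof (rule ccontr)
  assume "\<not> ?thesis"
  then obtain t2 where t2: "t0 \<le> t2" "R < D t2" by force
  define E where "E = {t. t0 \<le> t \<and> R < D t}"
  define t1 where "t1 = Inf E"
  have Ene: "E \<noteq> {}" using t2 E_def by blast
  have bdd: "bdd_below E" unfolding E_def bdd_below_def by auto
  have t01: "t0 \<le> t1" unfolding t1_def using Ene by (intro cInf_greatest) (auto simp: E_def)
  have below: "D t \<le> R" if "t0 \<le> t" "t < t1" for t
  proof (rule ccontr)
    assume "\<not> D t \<le> R"
    then have "t \<in> E" using that E_def by auto
    then have "t1 \<le> t" unfolding t1_def using bdd by (rule cInf_lower)
    then show False using that by simp
  qed
  have ct1: "continuous (at t1 within {t0..}) D"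
    using cont t01 by (simp add: continuous_on_eq_continuous_within)
  have Dt1: "D t1 \<le> R"
  proof (cases "t1 = t0")
    case True then show ?thesis using start by simp
  next
    case False
    then have lt: "t0 < t1" using t01 by simp
    show ?thesis
    proof (rule ccontr)
      assume "\<not> D t1 \<le> R"
      then have pos: "D t1 - R > 0" by simp
      obtain \<eta> where eta: "\<eta> > 0" "\<And>t. t \<in> {t0..} \<Longrightarrow> dist t t1 < \<eta> \<Longrightarrow> dist (D t) (D t1) < D t1 - R"
        using ct1[unfolded continuous_within_eps_delta] pos by blast
      define t where "t = max t0 (t1 - \<eta>/2)"
      have "t \<in> {t0..}" "dist t t1 < \<eta>" "t < t1" using eta(1) lt by (auto simp: t_def dist_real_def)
      then have "dist (D t) (D t1) < D t1 - R" "D t \<le> R" using eta(2) below by auto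
      then show False by (simp add: dist_real_def)
    qed
  qed
  obtain \<delta> where d: "\<delta> > 0" "\<And>s. t1 \<le> s \<and> s \<le> t1 + \<delta> \<Longrightarrow> D s \<le> D t1"
    using loc[OF t01 Dt1] by blast
  have "t1 + \<delta> \<le> Inf E"
  proof (rule cInf_greatest[OF Ene])
    fix e assume "e \<in> E"
    then have e: "t0 \<le> e" "R < D e" by (auto simp: E_def)
    show "t1 + \<delta> \<le> e"
    proof (rule ccontr)
      assume "\<not> t1 + \<delta> \<le> e"
      then have "e < t1 + \<delta>" by simp
      show False
      proof (cases "e < t1")
        case True then show False using below e by force
      next
        case False then have "D e \<le> D t1" using d \<open>e < t1 + \<delta>\<close> by auto
        then show False using Dt1 e by simp
      qed
    qed
  qed
  then show False using d(1) t1_def by simp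
qed

lemma seg_ball:
  fixes \<Phi> :: "'a::real_normed_vector \<Rightarrow> 'b::real_normed_vector"
  assumes D1: "\<And>x. (\<Phi> has_derivative blinfun_apply (\<Phi>' x)) (at x)"
    and bnd: "\<And>x. \<Phi> x \<in> ball yc \<epsilon> \<Longrightarrow> norm (\<Phi>' x) \<le> B"
    and B0: "B \<ge> 0"
    and small: "norm (\<Phi> a - yc) + B * norm (b - a) < \<epsilon>"
  shows "norm (\<Phi> b - \<Phi> a) \<le> B * norm (b - a)"
proof -
  define L where "L = B * norm (b - a)"
  define \<gamma> where "\<gamma> s = a + min s 1 *\<^sub>R (b - a)" for s :: real
  define D where "D s = norm (\<Phi> (\<gamma> s) - \<Phi> a) - L * min s 1" for s
  have contPhi: "continuous_on UNIV \<Phi>"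
    using D1 by (meson continuous_at_imp_continuous_on has_derivative_continuous)
  have cont: "continuous_on {0..} D"
    unfolding D_def \<gamma>_def
    by (intro continuous_intros continuous_on_compose2[OF contPhi]) auto
  have L0: "L \<ge> 0" unfolding L_def using B0 by simp
  have "\<forall>t\<ge>0. D t \<le> 0"
  proof (rule stay_gen[OF cont])
    show "D 0 \<le> 0" by (simp add: D_def \<gamma>_def)
  next
    fix t :: real assume t0: "0 \<le> t" and Dt: "D t \<le> 0"
    show "\<exists>\<delta>>0. \<forall>s. t \<le> s \<and> s \<le> t + \<delta> \<longrightarrow> D s \<le> D t"
    proof (cases "1 \<le> t")
      case True
      then show ?thesis by (intro exI[of _ 1]) (auto simp: D_def \<gamma>_def)
    next
      case False
      define p where "p = \<gamma> t"
      have mt: "min t 1 = t" using False by simp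
      have "norm (\<Phi> p - \<Phi> a) \<le> L * t" using Dt mt by (simp add: D_def p_def)
      also have "\<dots> \<le> L" using False L0 by (simp add: mult_left_le)
      finally have "norm (\<Phi> p - yc) < \<epsilon>"
        using small norm_triangle_ineq[of "\<Phi> p - \<Phi> a" "\<Phi> a - yc"] unfolding L_def by simp
      then have "p \<in> \<Phi> -` ball yc \<epsilon>" by (simp add: dist_norm norm_minus_commute)
      moreover have "open (\<Phi> -` ball yc \<epsilon>)" using contPhi by (simp add: open_vimage)
      ultimately obtain r where r: "r > 0" "ball p r \<subseteq> \<Phi> -` ball yc \<epsilon>"
        using open_contains_ball by blast
      define \<delta> where "\<delta> = min (1 - t) (r / (2 * (norm (b - a) + 1)))"
      have np0: "norm (b - a) + 1 > 0" using norm_ge_zero[of "b - a"] by linarith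
      then have np: "2 * (norm (b - a) + 1) > 0" by simp
      have dpos: "\<delta> > 0" using False r(1) np unfolding \<delta>_def by simp
      show ?thesis
      proof (intro exI[of _ \<delta>] conjI dpos allI impI)
        fix s assume s: "t \<le> s \<and> s \<le> t + \<delta>"
        then have ms: "min s 1 = s" using \<delta>_def by auto
        have gs: "\<gamma> s - p = (s - t) *\<^sub>R (b - a)" using ms mt by (simp add: \<gamma>_def p_def algebra_simps)
        have ngs: "norm (\<gamma> s - p) = (s - t) * norm (b - a)" using gs s by simp
        have "norm (\<gamma> s - p) = (s - t) * norm (b - a)" by (rule ngs)
        also have "\<dots> \<le> \<delta> * norm (b - a)" using s by (simp add: mult_right_mono)
        also have "\<dots> \<le> (r / (2 * (norm (b - a) + 1))) * (norm (b - a) + 1)"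
          using r(1) np by (intro mult_mono) (auto simp: \<delta>_def)
        also have "\<dots> = r / 2" using np0 by (simp add: field_simps)
        also have "\<dots> < r" using r(1) by simp
        finally have "\<gamma> s \<in> ball p r" by (simp add: dist_norm norm_minus_commute)
        have "norm (\<Phi> (\<gamma> s) - \<Phi> p) \<le> B * norm (\<gamma> s - p)"
        proof (rule differentiable_bound[OF convex_ball])
          show "\<And>x. x \<in> ball p r \<Longrightarrow> (\<Phi> has_derivative blinfun_apply (\<Phi>' x)) (at x within ball p r)"
            using D1 has_derivative_at_withinI by blast
          show "\<And>x. x \<in> ball p r \<Longrightarrow> onorm (blinfun_apply (\<Phi>' x)) \<le> B"
            using r(2) bnd by (auto simp: norm_blinfun.rep_eq[symmetric])
          show "\<gamma> s \<in> ball p r" by fact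
          show "p \<in> ball p r" using r(1) by simp
        qed
        also have "B * norm (\<gamma> s - p) = L * (s - t)" by (simp add: L_def ngs)
        finally have "norm (\<Phi> (\<gamma> s) - \<Phi> p) \<le> L * (s - t)" .
        then have "norm (\<Phi> (\<gamma> s) - \<Phi> a) \<le> norm (\<Phi> p - \<Phi> a) + L * (s - t)"
          using norm_triangle_ineq[of "\<Phi> (\<gamma> s) - \<Phi> p" "\<Phi> p - \<Phi> a"] by simp
        then show "D s \<le> D t" using ms mt by (simp add: D_def p_def algebra_simps)
      qed
    qed
  qed
  then have "D 1 \<le> 0" by simp
  then show ?thesis by (simp add: D_def \<gamma>_def L_def)
qed

lemma gradient_eq:
  fixes g :: "'a::real_inner \<Rightarrow> real"
  assumes "(g has_derivative (\<lambda>h. G \<bullet> h)) (at x)"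
  shows "gradient g x = G"
  unfolding gradient_def
proof (rule the_equality)
  show "(g has_derivative (\<lambda>h. G \<bullet> h)) (at x)" by (rule assms)
next
  fix v assume "(g has_derivative (\<lambda>h. v \<bullet> h)) (at x)"
  from has_derivative_unique[OF this assms] have "\<And>h. v \<bullet> h = G \<bullet> h" by metis
  then have "(v - G) \<bullet> (v - G) = 0" by (simp add: inner_diff_left)
  then show "v = G" by simp
qed

lemma loss_deriv:
  fixes \<Phi> :: "real^'w \<Rightarrow> real^'d"
  assumes D: "(\<Phi> has_derivative blinfun_apply J) (at x)"
  shows "(loss \<Phi> f has_derivative (\<lambda>h. (- adjoint (blinfun_apply J) (f - \<Phi> x)) \<bullet> h)) (at x)"
proof -
  have lin: "linear (blinfun_apply J)" unfolding linear_conv_bounded_linear by (rule blinfun.bounded_linear_right)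
  have eq: "loss \<Phi> f = (\<lambda>w. (1/2) * ((f - \<Phi> w) \<bullet> (f - \<Phi> w)))"
    by (auto simp: loss_def power2_norm_eq_inner)
  have "((\<lambda>w. (1/2) * ((f - \<Phi> w) \<bullet> (f - \<Phi> w))) has_derivative
     (\<lambda>h. (1/2) * ((f - \<Phi> x) \<bullet> (0 - blinfun_apply J h) + (0 - blinfun_apply J h) \<bullet> (f - \<Phi> x)))) (at x)"
    by (rule derivative_eq_intros D refl)+ simp
  moreover have "(\<lambda>h. (1/2) * ((f - \<Phi> x) \<bullet> (0 - blinfun_apply J h) + (0 - blinfun_apply J h) \<bullet> (f - \<Phi> x)))
      = (\<lambda>h. (- adjoint (blinfun_apply J) (f - \<Phi> x)) \<bullet> h)"
    by (auto simp: adjoint_works[OF lin] inner_commute)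
  ultimately show ?thesis unfolding eq by simp
qed

lemma taylor_K:
  fixes \<Phi> :: "real^'w \<Rightarrow> real^'d"
    and \<Phi>' :: "real^'w \<Rightarrow> ((real^'w) \<Rightarrow>\<^sub>L (real^'d))"
    and \<Phi>'' :: "real^'w \<Rightarrow> ((real^'w) \<Rightarrow>\<^sub>L ((real^'w) \<Rightarrow>\<^sub>L (real^'d)))"
  assumes D1: "\<And>w. (\<Phi> has_derivative blinfun_apply (\<Phi>' w)) (at w)"
    and D2: "\<And>w. (\<Phi>' has_derivative blinfun_apply (\<Phi>'' w)) (at w)"
    and K: "convex K" "x \<in> K" "y \<in> K"
    and bnd2: "\<And>z. z \<in> K \<Longrightarrow> norm (\<Phi>'' z) \<le> B"
    and B0: "B \<ge> 0"
    and diam: "\<And>z. z \<in> K \<Longrightarrow> norm (z - y) \<le> \<rho>"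
  shows "norm (\<Phi> x - \<Phi> y - \<Phi>' y (x - y)) \<le> norm (x - y) * (B * \<rho>)"
proof -
    have "norm (\<Phi> x - \<Phi> y - blinfun_apply (\<Phi>' y) (x - y)) \<le> norm (x - y) * (B * \<rho>)"
    proof (rule differentiable_bound_linearization[where S=K])
      show "y + t *\<^sub>R (x - y) \<in> K" if t: "t \<in> {0..1}" for t
      proof -
        have "y + t *\<^sub>R (x - y) = (1 - t) *\<^sub>R y + t *\<^sub>R x" by (simp add: algebra_simps)
        then show ?thesis using K(1)[unfolded convex_alt] K(2,3) t by auto
      qed
      show "\<And>z. z \<in> K \<Longrightarrow> (\<Phi> has_derivative blinfun_apply (\<Phi>' z)) (at z within K)"
        using D1 has_derivative_at_withinI by blast
      show "y \<in> K" by (rule K(3))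
      fix z assume z: "z \<in> K"
      have lz: "norm (\<Phi>' z - \<Phi>' y) \<le> B * norm (z - y)"
      proof (rule differentiable_bound[OF K(1) _ _ z K(3)])
        show "\<And>z. z \<in> K \<Longrightarrow> (\<Phi>' has_derivative blinfun_apply (\<Phi>'' z)) (at z within K)"
          using D2 has_derivative_at_withinI by blast
        show "\<And>z. z \<in> K \<Longrightarrow> onorm (blinfun_apply (\<Phi>'' z)) \<le> B"
          using bnd2 by (simp add: norm_blinfun.rep_eq[symmetric])
      qed
      also have "\<dots> \<le> B * \<rho>" using diam[OF z] B0 by (simp add: mult_left_mono)
      finally have "norm (\<Phi>' z - \<Phi>' y) \<le> B * \<rho>" .
      moreover have "blinfun_apply (\<Phi>' z) - blinfun_apply (\<Phi>' y) = blinfun_apply (\<Phi>' z - \<Phi>' y)"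
        by (rule ext) (simp add: blinfun.diff_left)
      ultimately show "onorm (blinfun_apply (\<Phi>' z) - blinfun_apply (\<Phi>' y)) \<le> B * \<rho>"
        by (simp add: norm_blinfun.rep_eq)
    qed
    then show ?thesis by simp
qed

lemma mono_ineq:
  fixes \<Phi> :: "real^'w \<Rightarrow> real^'d"
    and \<Phi>' :: "real^'w \<Rightarrow> ((real^'w) \<Rightarrow>\<^sub>L (real^'d))"
    and \<Phi>'' :: "real^'w \<Rightarrow> ((real^'w) \<Rightarrow>\<^sub>L ((real^'w) \<Rightarrow>\<^sub>L (real^'d)))"
  assumes D1: "\<And>w. (\<Phi> has_derivative blinfun_apply (\<Phi>' w)) (at w)"
    and D2: "\<And>w. (\<Phi>' has_derivative blinfun_apply (\<Phi>'' w)) (at w)"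
    and K: "convex K" "x \<in> K" "y \<in> K"
    and bnd1: "\<And>z. z \<in> K \<Longrightarrow> norm (\<Phi>' z) \<le> B"
    and bnd2: "\<And>z. z \<in> K \<Longrightarrow> norm (\<Phi>'' z) \<le> B"
    and diam: "\<And>z. z \<in> K \<Longrightarrow> norm (z - y) \<le> \<rho>"
    and cc: "\<And>v. c * (norm v)^2 \<le> (norm (\<Phi>' y v))^2"
  shows "(c - B * (B * \<rho>) - B * norm (f - \<Phi> x)) * (norm (x - y))^2 \<le>
     ((- adjoint (blinfun_apply (\<Phi>' x)) (f - \<Phi> x)) - (- adjoint (blinfun_apply (\<Phi>' y)) (f - \<Phi> y))) \<bullet> (x - y)"
proof -
  define v where "v = x - y"
  define rx where "rx = f - \<Phi> x"
  define ry where "ry = f - \<Phi> y"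
  define E where "E = \<Phi> x - \<Phi> y - \<Phi>' y v"
  have B0: "B \<ge> 0" using bnd1[OF K(2)] norm_ge_zero by (metis order_trans)
  have linx: "linear (blinfun_apply (\<Phi>' x))" unfolding linear_conv_bounded_linear by (rule blinfun.bounded_linear_right)
  have liny: "linear (blinfun_apply (\<Phi>' y))" unfolding linear_conv_bounded_linear by (rule blinfun.bounded_linear_right)
  have lip: "norm (\<Phi>' x - \<Phi>' y) \<le> B * norm (x - y)"
  proof (rule differentiable_bound[OF K(1) _ _ K(2,3)])
    show "\<And>z. z \<in> K \<Longrightarrow> (\<Phi>' has_derivative blinfun_apply (\<Phi>'' z)) (at z within K)"
      using D2 has_derivative_at_withinI by blast
    show "\<And>z. z \<in> K \<Longrightarrow> onorm (blinfun_apply (\<Phi>'' z)) \<le> B"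
      using bnd2 by (simp add: norm_blinfun.rep_eq[symmetric])
  qed
  have Eb: "norm E \<le> norm v * (B * \<rho>)"
    unfolding E_def v_def using taylor_K[OF D1 D2 K bnd2 B0 diam] by blast
  have ry: "ry = rx + \<Phi>' y v + E" by (simp add: rx_def ry_def E_def)
  have "((- adjoint (blinfun_apply (\<Phi>' x)) rx) - (- adjoint (blinfun_apply (\<Phi>' y)) ry)) \<bullet> v
      = \<Phi>' y v \<bullet> ry - \<Phi>' x v \<bullet> rx"
    by (simp add: inner_commute[of _ v] inner_diff_right adjoint_works[OF linx] adjoint_works[OF liny])
  also have "\<dots> = (norm (\<Phi>' y v))^2 + \<Phi>' y v \<bullet> E + (\<Phi>' y v - \<Phi>' x v) \<bullet> rx"
    by (simp add: ry inner_add_right inner_diff_left power2_norm_eq_inner)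
  finally have eq: "((- adjoint (blinfun_apply (\<Phi>' x)) rx) - (- adjoint (blinfun_apply (\<Phi>' y)) ry)) \<bullet> v
      = (norm (\<Phi>' y v))^2 + \<Phi>' y v \<bullet> E + (\<Phi>' y v - \<Phi>' x v) \<bullet> rx" .
  have t1: "\<bar>\<Phi>' y v \<bullet> E\<bar> \<le> B * (B * \<rho>) * (norm v)^2"
  proof -
    have "\<bar>\<Phi>' y v \<bullet> E\<bar> \<le> norm (\<Phi>' y v) * norm E" by (rule Cauchy_Schwarz_ineq2)
    also have "\<dots> \<le> (B * norm v) * (norm v * (B * \<rho>))"
    proof (rule mult_mono[OF _ Eb])
      show "norm (\<Phi>' y v) \<le> B * norm v"
        using norm_blinfun[of "\<Phi>' y" v] bnd1[OF K(3)] by (meson mult_right_mono norm_ge_zero order_trans)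
    qed (use B0 in auto)
    finally show ?thesis by (simp add: power2_eq_square algebra_simps)
  qed
  have t2: "\<bar>(\<Phi>' y v - \<Phi>' x v) \<bullet> rx\<bar> \<le> B * norm rx * (norm v)^2"
  proof -
    have "\<bar>(\<Phi>' y v - \<Phi>' x v) \<bullet> rx\<bar> \<le> norm (\<Phi>' y v - \<Phi>' x v) * norm rx" by (rule Cauchy_Schwarz_ineq2)
    also have "norm (\<Phi>' y v - \<Phi>' x v) = norm ((\<Phi>' x - \<Phi>' y) v)"
      by (simp add: minus_blinfun.rep_eq norm_minus_commute)
    also have "\<dots> \<le> norm (\<Phi>' x - \<Phi>' y) * norm v" by (rule norm_blinfun)
    also have "\<dots> \<le> B * norm v * norm v" using lip by (simp add: v_def mult_right_mono)
    finally show ?thesis by (simp add: power2_eq_square mult_right_mono algebra_simps)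
  qed
  have "(c - B * (B * \<rho>) - B * norm rx) * (norm v)^2 \<le>
      (norm (\<Phi>' y v))^2 + \<Phi>' y v \<bullet> E + (\<Phi>' y v - \<Phi>' x v) \<bullet> rx"
    using cc[of v] t1 t2 by (simp add: algebra_simps)
  then show ?thesis using eq by (simp add: v_def rx_def ry_def)
qed

theorem proposition2:
  fixes \<Phi> :: "real^'w \<Rightarrow> real^'d"
    and \<Phi>' :: "real^'w \<Rightarrow> ((real^'w) \<Rightarrow>\<^sub>L (real^'d))"
    and \<Phi>'' :: "real^'w \<Rightarrow> ((real^'w) \<Rightarrow>\<^sub>L ((real^'w) \<Rightarrow>\<^sub>L (real^'d)))"
    and U :: "(real^'d) set"
  assumes dims: "CARD('w) < CARD('d)"
    and D1: "\<And>w. (\<Phi> has_derivative blinfun_apply (\<Phi>' w)) (at w)"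
    and D2: "\<And>w. (\<Phi>' has_derivative blinfun_apply (\<Phi>'' w)) (at w)"
    and C2: "continuous_on UNIV \<Phi>''"
    and U_open: "open U"
    and bdd: "\<exists>B. \<forall>w\<in>\<Phi> -` U. norm (\<Phi>' w) \<le> B \<and> norm (\<Phi>'' w) \<le> B"
    and nondeg: "\<exists>c>0. \<forall>w\<in>\<Phi> -` U.
        eigenvalues_ge (transpose (matrix (blinfun_apply (\<Phi>' w))) ** matrix (blinfun_apply (\<Phi>' w))) c"
  shows "GF_learnable \<Phi> \<inter> U \<subseteq> range \<Phi>"
proof
  fix f assume fin: "f \<in> GF_learnable \<Phi> \<inter> U"
  then have fU: "f \<in> U" by simp
  from fin obtain w where w0: "w 0 = 0"
    and wd: "\<forall>t\<ge>0. (w has_vector_derivative (- gradient (loss \<Phi> f) (w t))) (at t within {0..})"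
    and winf: "(INF t\<in>{0..}. loss \<Phi> f (w t)) = 0"
    unfolding GF_learnable_def by blast
  define g where "g = loss \<Phi> f"
  define G where "G x = - adjoint (blinfun_apply (\<Phi>' x)) (f - \<Phi> x)" for x
  have gder: "(g has_derivative (\<lambda>h. G x \<bullet> h)) (at x)" for x
    unfolding g_def G_def by (rule loss_deriv[OF D1])
  have grad: "gradient g x = G x" for x using gradient_eq[OF gder] .
  have wd': "(w has_vector_derivative (- G (w t))) (at t within {0..})" if "t \<ge> 0" for t
    using wd that grad unfolding g_def by simp
  have g_eq: "g x = (1/2) * (norm (f - \<Phi> x))^2" for x by (simp add: g_def loss_def)
  have wcont: "continuous_on {0..} w"
    unfolding continuous_on_eq_continuous_within
    by (auto intro!: has_vector_derivative_continuous[OF wd'])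
  have gcont: "continuous_on UNIV g"
    using gder by (meson continuous_at_imp_continuous_on has_derivative_continuous)

  have gw_der: "((g \<circ> w) has_derivative (\<lambda>h. h * (- (G (w x) \<bullet> G (w x))))) (at x within S)"
    if "x \<ge> 0" "S \<subseteq> {0..}" for x S
  proof -
    have "(w has_derivative (\<lambda>h. h *\<^sub>R (- G (w x)))) (at x within S)"
      using has_vector_derivative_within_subset[OF wd'[OF that(1)] that(2)]
      unfolding has_vector_derivative_def .
    moreover have "(g has_derivative (\<lambda>h. G (w x) \<bullet> h)) (at (w x) within w ` S)"
      using gder has_derivative_at_withinI by blast
    ultimately have "((g \<circ> w) has_derivative ((\<lambda>h. G (w x) \<bullet> h) \<circ> (\<lambda>h. h *\<^sub>R (- G (w x))))) (at x within S)"
      by (rule diff_chain_within)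
    moreover have "((\<lambda>h. G (w x) \<bullet> h) \<circ> (\<lambda>h. h *\<^sub>R (- G (w x)))) = (\<lambda>h. h * (- (G (w x) \<bullet> G (w x))))"
      by (auto simp: o_def)
    ultimately show ?thesis by simp
  qed
  have gmono: "g (w t) \<le> g (w s)" if "0 \<le> s" "s \<le> t" for s t
  proof -
    have "\<exists>x\<in>{s..t}. (g \<circ> w) t - (g \<circ> w) s = (t - s) * (- (G (w x) \<bullet> G (w x)))"
      by (rule mvt_very_simple[OF that(2)]) (rule gw_der, use that in auto)
    then obtain x where "(g \<circ> w) t - (g \<circ> w) s = (t - s) * (- (G (w x) \<bullet> G (w x)))" by blast
    moreover have "(t - s) * (- (G (w x) \<bullet> G (w x))) \<le> 0"
      using that by (simp add: mult_nonneg_nonneg)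
    ultimately show ?thesis by simp
  qed
  have small: "\<exists>t\<ge>0. g (w t) < \<eta>" if "\<eta> > 0" for \<eta>
  proof (rule ccontr)
    assume "\<not> ?thesis" then have "\<forall>t\<ge>0. \<eta> \<le> g (w t)" by auto
    then have "\<eta> \<le> (INF t\<in>{0..}. g (w t))" by (intro cINF_greatest) auto
    then show False using winf that g_def by simp
  qed

  obtain B0 where B0: "\<forall>x\<in>\<Phi> -` U. norm (\<Phi>' x) \<le> B0 \<and> norm (\<Phi>'' x) \<le> B0" using bdd by blast
  define B where "B = max B0 1"
  have Bpos: "B > 0" by (simp add: B_def)
  have bnd1: "norm (\<Phi>' x) \<le> B" if "\<Phi> x \<in> U" for x using B0 that by (force simp: B_def)
  have bnd2: "norm (\<Phi>'' x) \<le> B" if "\<Phi> x \<in> U" for x using B0 that by (force simp: B_def)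
  obtain c where c: "c > 0" "\<forall>x\<in>\<Phi> -` U.
        eigenvalues_ge (transpose (matrix (blinfun_apply (\<Phi>' x))) ** matrix (blinfun_apply (\<Phi>' x))) c"
    using nondeg by blast
  have coer: "c * (norm v)^2 \<le> (norm (\<Phi>' x v))^2" if "\<Phi> x \<in> U" for x v
  proof (rule rayleigh)
    show "linear (blinfun_apply (\<Phi>' x))" unfolding linear_conv_bounded_linear by (rule blinfun.bounded_linear_right)
    show "eigenvalues_ge (transpose (matrix (blinfun_apply (\<Phi>' x))) ** matrix (blinfun_apply (\<Phi>' x))) c"
      using c(2) that by blast
  qed
  obtain \<epsilon> where eps: "\<epsilon> > 0" "ball f \<epsilon> \<subseteq> U" using U_open fU open_contains_ball by blast
  define sc where "sc = sqrt c"
  have sc: "sc > 0" "sc^2 = c" using c(1) by (auto simp: sc_def)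
  define \<rho> where "\<rho> = min (\<epsilon>/(4*B)) (min (c/(6*B^2)) (sc/(4*B)))"
  have rho: "\<rho> > 0" using eps(1) c(1) sc Bpos by (simp add: \<rho>_def)
  have rho1: "B * \<rho> \<le> \<epsilon>/4"
  proof -
    have "\<rho> \<le> \<epsilon>/(4*B)" by (simp add: \<rho>_def)
    then show ?thesis using Bpos by (simp add: field_simps)
  qed
  have rho2: "3 * B^2 * \<rho> \<le> c/2"
  proof -
    have "\<rho> \<le> c/(6*B^2)" by (simp add: \<rho>_def)
    then show ?thesis using Bpos by (simp add: field_simps)
  qed
  have rho3: "2 * B * \<rho> \<le> sc/2"
  proof -
    have "\<rho> \<le> sc/(4*B)" by (simp add: \<rho>_def)
    then show ?thesis using Bpos by (simp add: field_simps)
  qed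
  define \<delta> where "\<delta> = min (\<epsilon>/2) (min (c/(4*B)) (sc*\<rho>/8))"
  have dpos: "\<delta> > 0" using eps(1) c(1) sc rho Bpos by (simp add: \<delta>_def)
  have d1: "\<delta> \<le> \<epsilon>/2" and d2: "B * \<delta> \<le> c/4" and d3: "\<delta> \<le> sc*\<rho>/8"
  proof -
    show "\<delta> \<le> \<epsilon>/2" by (simp add: \<delta>_def)
    show "\<delta> \<le> sc*\<rho>/8" by (simp add: \<delta>_def)
    have "\<delta> \<le> c/(4*B)" by (simp add: \<delta>_def)
    then show "B * \<delta> \<le> c/4" using Bpos by (simp add: field_simps)
  qed
  obtain t0 where t0: "t0 \<ge> 0" "g (w t0) < \<delta>^2/2" using small[of "\<delta>^2/2"] dpos by auto
  define a where "a = w t0"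
  have ra: "norm (f - \<Phi> a) < \<delta>"
  proof -
    have "(norm (f - \<Phi> a))^2 < \<delta>^2" using t0(2) g_eq[of a] a_def by simp
    then show ?thesis using dpos by (simp add: power_less_imp_less_base less_imp_le)
  qed
  define K where "K = cball a \<rho>"
  have convK: "convex K" by (simp add: K_def)
  have inK: "norm (\<Phi> x - \<Phi> a) \<le> B * \<rho> \<and> \<Phi> x \<in> U" if "x \<in> K" for x
  proof -
    have xa: "norm (x - a) \<le> \<rho>" using that by (simp add: K_def dist_norm norm_minus_commute)
    have "norm (\<Phi> x - \<Phi> a) \<le> B * norm (x - a)"
    proof (rule seg_ball[OF D1, where yc=f and \<epsilon>=\<epsilon>])
      show "\<And>x. \<Phi> x \<in> ball f \<epsilon> \<Longrightarrow> norm (\<Phi>' x) \<le> B" using bnd1 eps(2) by blast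
      show "B \<ge> 0" using Bpos by simp
      have "B * norm (x - a) \<le> B * \<rho>" using xa Bpos by simp
      moreover have "norm (\<Phi> a - f) = norm (f - \<Phi> a)" by (rule norm_minus_commute)
      ultimately show "norm (\<Phi> a - f) + B * norm (x - a) < \<epsilon>"
        using ra rho1 d1 eps(1) by linarith
    qed
    also have "\<dots> \<le> B * \<rho>" using xa Bpos by simp
    finally have n1: "norm (\<Phi> x - \<Phi> a) \<le> B * \<rho>" .
    have "norm (\<Phi> x - f) \<le> norm (\<Phi> x - \<Phi> a) + norm (\<Phi> a - f)"
      using norm_triangle_ineq[of "\<Phi> x - \<Phi> a" "\<Phi> a - f"] by simp
    moreover have "norm (\<Phi> a - f) = norm (f - \<Phi> a)" by (rule norm_minus_commute)
    ultimately have "norm (\<Phi> x - f) < \<epsilon>" using n1 rho1 ra d1 eps(1) by linarith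
    then have "\<Phi> x \<in> U" using eps(2) by (auto simp: dist_norm norm_minus_commute)
    then show ?thesis using n1 by simp
  qed
  have rK: "norm (f - \<Phi> x) \<le> norm (f - \<Phi> a) + B * \<rho>" if "x \<in> K" for x
  proof -
    have "norm (f - \<Phi> x) \<le> norm (f - \<Phi> a) + norm (\<Phi> a - \<Phi> x)"
      using norm_triangle_ineq[of "f - \<Phi> a" "\<Phi> a - \<Phi> x"] by simp
    then show ?thesis using inK[OF that] by (simp add: norm_minus_commute)
  qed
  have diamK: "norm (z - y) \<le> 2 * \<rho>" if "z \<in> K" "y \<in> K" for z y
  proof -
    have "norm (z - y) \<le> norm (z - a) + norm (a - y)" using norm_triangle_ineq[of "z - a" "a - y"] by simp
    then show ?thesis using that by (simp add: K_def dist_norm norm_minus_commute)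
  qed
  have monoK: "0 \<le> (G x - G y) \<bullet> (x - y)" if "x \<in> K" "y \<in> K" for x y
  proof -
    have "(c - B * (B * (2 * \<rho>)) - B * norm (f - \<Phi> x)) * (norm (x - y))^2 \<le> (G x - G y) \<bullet> (x - y)"
      unfolding G_def
    proof (rule mono_ineq[OF D1 D2 convK that])
      show "\<And>z. z \<in> K \<Longrightarrow> norm (\<Phi>' z) \<le> B" using bnd1 inK by blast
      show "\<And>z. z \<in> K \<Longrightarrow> norm (\<Phi>'' z) \<le> B" using bnd2 inK by blast
      show "\<And>z. z \<in> K \<Longrightarrow> norm (z - y) \<le> 2 * \<rho>" using diamK that(2) by blast
      show "\<And>v. c * (norm v)^2 \<le> (norm (\<Phi>' y v))^2" using coer inK that(2) by blast
    qed
    moreover have "0 \<le> c - B * (B * (2 * \<rho>)) - B * norm (f - \<Phi> x)"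
    proof -
      have "B * norm (f - \<Phi> x) \<le> B * (norm (f - \<Phi> a) + B * \<rho>)" using rK[OF that(1)] Bpos by simp
      moreover have "B * norm (f - \<Phi> a) \<le> B * \<delta>" using ra Bpos by simp
      ultimately show ?thesis using rho2 d2 c(1) by (simp add: algebra_simps power2_eq_square; linarith)
    qed
    ultimately show ?thesis by (meson mult_nonneg_nonneg order_trans zero_le_power2)
  qed

  obtain ws where ws: "ws \<in> K" "\<And>x. x \<in> K \<Longrightarrow> g ws \<le> g x"
  proof -
    have "continuous_on K g" using gcont by (rule continuous_on_subset) simp
    moreover have "K \<noteq> {}" using rho by (simp add: K_def)
    ultimately have "\<exists>x\<in>K. \<forall>y\<in>K. g x \<le> g y"
      using continuous_attains_inf[of K g] by (simp add: K_def)
    then show ?thesis using that by blast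
  qed
  have aK: "a \<in> K" using rho by (simp add: K_def)
  define v where "v = ws - a"
  have rws: "norm (f - \<Phi> ws) \<le> norm (f - \<Phi> a)"
  proof -
    have "(norm (f - \<Phi> ws))^2 \<le> (norm (f - \<Phi> a))^2" using ws(2)[OF aK] g_eq by simp
    then show ?thesis by (rule power2_le_imp_le) simp
  qed
  have Ev: "norm (\<Phi> ws - \<Phi> a - \<Phi>' a v) \<le> norm v * (B * (2 * \<rho>))"
    unfolding v_def
  proof (rule taylor_K[OF D1 D2 convK ws(1) aK])
    show "\<And>z. z \<in> K \<Longrightarrow> norm (\<Phi>'' z) \<le> B" using bnd2 inK by blast
    show "B \<ge> 0" using Bpos by simp
    show "\<And>z. z \<in> K \<Longrightarrow> norm (z - a) \<le> 2 * \<rho>" using diamK aK by blast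
  qed
  have scv: "sc * norm v \<le> norm (\<Phi>' a v)"
  proof -
    have "c * (norm v)^2 \<le> (norm (\<Phi>' a v))^2" using coer inK aK by blast
    then have "(sc * norm v)^2 \<le> (norm (\<Phi>' a v))^2" using sc by (simp add: power_mult_distrib)
    then show ?thesis by (rule power2_le_imp_le) simp
  qed
  have "norm (\<Phi>' a v) \<le> norm (f - \<Phi> a) + norm (f - \<Phi> ws) + norm (\<Phi> ws - \<Phi> a - \<Phi>' a v)"
  proof -
    have "\<Phi>' a v = (f - \<Phi> a) - (f - \<Phi> ws) - (\<Phi> ws - \<Phi> a - \<Phi>' a v)" by simp
    then have "norm (\<Phi>' a v) = norm ((f - \<Phi> a) - (f - \<Phi> ws) - (\<Phi> ws - \<Phi> a - \<Phi>' a v))"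
      by (rule arg_cong)
    moreover have "norm ((f - \<Phi> a) - (f - \<Phi> ws) - (\<Phi> ws - \<Phi> a - \<Phi>' a v)) \<le>
        norm ((f - \<Phi> a) - (f - \<Phi> ws)) + norm (\<Phi> ws - \<Phi> a - \<Phi>' a v)" by (rule norm_triangle_ineq4)
    moreover have "norm ((f - \<Phi> a) - (f - \<Phi> ws)) \<le> norm (f - \<Phi> a) + norm (f - \<Phi> ws)" by (rule norm_triangle_ineq4)
    ultimately show ?thesis by linarith
  qed
  also have "\<dots> \<le> 2 * norm (f - \<Phi> a) + norm v * (sc / 2)"
  proof -
    have "norm v * (B * (2 * \<rho>)) \<le> norm v * (sc/2)" using rho3 by (intro mult_left_mono) auto
    then show ?thesis using rws Ev by simp
  qed
  finally have "sc * norm v \<le> 2 * norm (f - \<Phi> a) + norm v * (sc / 2)" using scv by simp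
  then have "sc * norm v < sc * \<rho> / 2" using ra d3 by (simp add: mult.commute[of "norm v"]; linarith)
  then have vsmall: "norm v < \<rho> / 2" using sc by (simp add: field_simps)
  define R0 where "R0 = norm (a - ws)"
  have R0: "R0 < \<rho>/2" "R0 \<ge> 0" using vsmall by (auto simp: R0_def v_def norm_minus_commute)

  have Gws: "G ws = 0"
  proof -
    have wsb: "ws \<in> ball a \<rho>" using vsmall rho by (simp add: v_def dist_norm norm_minus_commute)
    have "eventually (\<lambda>y. g ws \<le> g y) (at ws)"
      unfolding eventually_at_topological
      by (intro exI[of _ "ball a \<rho>"]) (use wsb ws(2) in \<open>auto simp: K_def\<close>)
    from has_derivative_local_min[OF gder this] have "\<And>h. G ws \<bullet> h = 0" by metis
    then show ?thesis by (metis inner_eq_zero_iff)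
  qed

  define D where "D t = (w t - ws) \<bullet> (w t - ws)" for t
  have Dder: "(D has_derivative (\<lambda>h. h * (- 2 * (G (w x) \<bullet> (w x - ws))))) (at x within S)"
    if "x \<ge> 0" "S \<subseteq> {0..}" for x S
  proof -
    have w1: "((\<lambda>t. w t - ws) has_derivative (\<lambda>h. h *\<^sub>R (- G (w x)))) (at x within S)"
      using has_vector_derivative_within_subset[OF wd'[OF that(1)] that(2)]
      unfolding has_vector_derivative_def by (intro derivative_eq_intros) auto
    have "(D has_derivative (\<lambda>h. (w x - ws) \<bullet> (h *\<^sub>R (- G (w x))) + (h *\<^sub>R (- G (w x))) \<bullet> (w x - ws))) (at x within S)"
      unfolding D_def by (rule has_derivative_inner[OF w1 w1])
    moreover have "(\<lambda>h. (w x - ws) \<bullet> (h *\<^sub>R (- G (w x))) + (h *\<^sub>R (- G (w x))) \<bullet> (w x - ws))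
        = (\<lambda>h. h * (- 2 * (G (w x) \<bullet> (w x - ws))))"
      by (auto simp: inner_commute algebra_simps)
    ultimately show ?thesis by simp
  qed
  have Dcont: "continuous_on {t0..} D"
    unfolding D_def using t0(1) by (intro continuous_intros continuous_on_subset[OF wcont]) auto
  have stay: "\<forall>t\<ge>t0. D t \<le> R0^2"
  proof (rule stay_gen[OF Dcont])
    show "D t0 \<le> R0^2" by (simp add: D_def R0_def a_def power2_norm_eq_inner)
  next
    fix t assume tt: "t0 \<le> t" "D t \<le> R0^2"
    have t0': "t \<ge> 0" using tt t0 by simp
    have "(norm (w t - ws))^2 \<le> R0^2" using tt(2) by (simp add: D_def power2_norm_eq_inner)
    then have wt: "norm (w t - ws) \<le> R0" using R0(2) by (rule power2_le_imp_le)
    have "continuous (at t within {0..}) w" using wcont t0' by (simp add: continuous_on_eq_continuous_within)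
    moreover have pos: "\<rho>/2 - R0 > 0" using R0 by simp
    ultimately obtain \<eta> where eta: "\<eta> > 0" "\<And>s. s \<in> {0..} \<Longrightarrow> dist s t < \<eta> \<Longrightarrow> dist (w s) (w t) < \<rho>/2 - R0"
      unfolding continuous_within_eps_delta by blast
    have near: "w s \<in> K" "norm (w s - ws) < \<rho>/2" if "t \<le> s" "s \<le> t + \<eta>/2" for s
    proof -
      have "dist (w s) (w t) < \<rho>/2 - R0" using eta that t0' by (simp add: dist_real_def)
      then have "norm (w s - ws) < \<rho>/2"
        using wt norm_triangle_ineq[of "w s - w t" "w t - ws"] by (simp add: dist_norm)
      moreover then have "norm (w s - a) < \<rho>"
        using R0 norm_triangle_ineq[of "w s - ws" "ws - a"] by (simp add: R0_def norm_minus_commute)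
      ultimately show "w s \<in> K" "norm (w s - ws) < \<rho>/2" by (auto simp: K_def dist_norm norm_minus_commute)
    qed
    show "\<exists>\<delta>>0. \<forall>s. t \<le> s \<and> s \<le> t + \<delta> \<longrightarrow> D s \<le> D t"
    proof (intro exI[of _ "\<eta>/2"] conjI allI impI)
      show "\<eta>/2 > 0" using eta by simp
      fix s assume s: "t \<le> s \<and> s \<le> t + \<eta>/2"
      have "\<exists>x\<in>{t..s}. D s - D t = (\<lambda>h. h * (- 2 * (G (w x) \<bullet> (w x - ws)))) (s - t)"
      proof (rule mvt_very_simple)
        show "t \<le> s" using s by simp
        fix x assume "t \<le> x" "x \<le> s"
        then show "(D has_derivative (\<lambda>h. h * (- 2 * (G (w x) \<bullet> (w x - ws))))) (at x within {t..s})"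
          using t0' by (intro Dder) auto
      qed
      then obtain x where x: "x \<in> {t..s}" "D s - D t = (s - t) * (- 2 * (G (w x) \<bullet> (w x - ws)))" by auto
      have "w x \<in> K" using near(1)[of x] x(1) s by auto
      then have "0 \<le> (G (w x) - G ws) \<bullet> (w x - ws)" using monoK ws(1) by blast
      then have "0 \<le> G (w x) \<bullet> (w x - ws)" using Gws by simp
      then have "(s - t) * (- 2 * (G (w x) \<bullet> (w x - ws))) \<le> 0" using s
        by (simp add: mult_nonneg_nonneg)
      then show "D s \<le> D t" using x(2) by simp
    qed
  qed
  have wK: "w t \<in> K" if "t \<ge> t0" for t
  proof -
    have "D t \<le> R0^2" using stay that by blast
    then have "(norm (w t - ws))^2 \<le> R0^2" by (simp add: D_def power2_norm_eq_inner)
    then have "norm (w t - ws) \<le> R0" using R0(2) by (rule power2_le_imp_le)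
    then have "norm (w t - a) \<le> \<rho>"
      using R0 norm_triangle_ineq[of "w t - ws" "ws - a"] by (simp add: R0_def norm_minus_commute)
    then show ?thesis by (simp add: K_def dist_norm norm_minus_commute)
  qed

  have lt: "g ws < \<eta>" if eta: "\<eta> > 0" for \<eta>
  proof -
    obtain t1 where t1: "t1 \<ge> 0" "g (w t1) < \<eta>" using small[OF eta] by blast
    have "g ws \<le> g (w (max t0 t1))" by (rule ws(2)[OF wK]) simp
    also have "\<dots> \<le> g (w t1)" by (rule gmono) (use t1 in auto)
    finally show ?thesis using t1(2) by simp
  qed
  have "g ws \<le> 0"
  proof (rule ccontr)
    assume "\<not> g ws \<le> 0"
    then have "g ws > 0" by simp
    from lt[OF this] show False by simp
  qed
  then have "(norm (f - \<Phi> ws))^2 \<le> 0" using g_eq[of ws] by simp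
  then have "norm (f - \<Phi> ws) = 0" by simp
  then have "f = \<Phi> ws" by simp
  then show "f \<in> range \<Phi>" by simp
qed

end
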